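(* Let $\mathbf{x}_1,\dots,\mathbf{x}_n$ be i.i.d. $N_p(\mathbf{0},\boldsymbol{\Sigma})$, where all diagonal entries of $\boldsymbol{\Sigma}$ equal $1$, $p=p_n\to\infty$ and $\log p=o(n)$. Write $\mathbf{x}_k=(x_{k1},\dots,x_{kp})^T$ and set, for $1\le i\le p$, $$L_i=-n+\sum_{k=1}^n x_{ki}^2,\qquad \epsilon_{n,i}=\Big(1+\frac{L_i}{n}\Big)^{-1/2}-1+\frac{L_i}{2n},$$ and for $i\ne j$ $$E_{ij}=\frac{L_iL_j}{4n^2}-\frac{L_i\epsilon_{n,j}}{2n}-\frac{L_j\epsilon_{n,i}}{2n}+\epsilon_{n,i}\epsilon_{n,j}+\epsilon_{n,i}+\epsilon_{n,j}.$$ Then $$\max_{1\le i<j\le p}\Big\{|E_{ij}|\cdot\Big|\frac1{\sqrt n}\sum_{k=1}^n x_{ki}x_{kj}\Big|\Big\}=O_{\mathbb P}\Big(\frac{\log p}{\sqrt n}\Big).$$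
   Context: $\xi_n=O_{\mathbb P}(a_n)$ means $\lim_{C\to\infty}\limsup_{n\to\infty}\mathbb P(|\xi_n/a_n|>C)=0$. *)

theory Defs
  imports "HOL-Probability.Probability"
begin

definition centered_normal :: "real \<Rightarrow> real measure" where
  "centered_normal v = (if v > 0 then density lborel (normal_density 0 (sqrt v)) else return lborel 0)"

definition gaussian_vector :: "'a measure \<Rightarrow> nat set \<Rightarrow> (nat \<Rightarrow> 'a \<Rightarrow> real) \<Rightarrow> (nat \<Rightarrow> nat \<Rightarrow> real) \<Rightarrow> bool" where
  "gaussian_vector M I X S \<longleftrightarrow>
     (\<forall>i\<in>I. X i \<in> borel_measurable M) \<and>
     (\<forall>a :: nat \<Rightarrow> real. distr M lborel (\<lambda>\<omega>. \<Sum>i\<in>I. a i * X i \<omega>) =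
        centered_normal (\<Sum>i\<in>I. \<Sum>j\<in>I. a i * a j * S i j))"

definition bigOP :: "(nat \<Rightarrow> 'a measure) \<Rightarrow> (nat \<Rightarrow> 'a \<Rightarrow> real) \<Rightarrow> (nat \<Rightarrow> real) \<Rightarrow> bool" where
  "bigOP M \<xi> a \<longleftrightarrow>
     ((\<lambda>C::real. limsup (\<lambda>n. ereal (measure (M n) {\<omega> \<in> space (M n). \<bar>\<xi> n \<omega> / a n\<bar> > C})))
        \<longlongrightarrow> 0) at_top"

definition Lstat :: "nat \<Rightarrow> (nat \<Rightarrow> nat \<Rightarrow> real) \<Rightarrow> nat \<Rightarrow> real" where
  "Lstat n x i = - real n + (\<Sum>k=1..n. (x k i)\<^sup>2)"

definition epsn :: "nat \<Rightarrow> (nat \<Rightarrow> nat \<Rightarrow> real) \<Rightarrow> nat \<Rightarrow> real" where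
  "epsn n x i = (1 + Lstat n x i / real n) powr (-1/2) - 1 + Lstat n x i / (2 * real n)"

definition Estat :: "nat \<Rightarrow> (nat \<Rightarrow> nat \<Rightarrow> real) \<Rightarrow> nat \<Rightarrow> nat \<Rightarrow> real" where
  "Estat n x i j =
     Lstat n x i * Lstat n x j / (4 * (real n)\<^sup>2)
     - Lstat n x i * epsn n x j / (2 * real n)
     - Lstat n x j * epsn n x i / (2 * real n)
     + epsn n x i * epsn n x j + epsn n x i + epsn n x j"

end

theory Submission
  imports Defs
begin


lemma exp_bound_aux:
  fixes l :: real assumes "\<bar>l\<bar> \<le> 1/4"
  shows "exp (-l) / sqrt (1 - 2*l) \<le> exp (4 * l\<^sup>2)"
proof -
  have ln: "-2*l - 8*l\<^sup>2 \<le> ln (1 - 2*l)"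
  proof (cases "l \<ge> 0")
    case True
    from ln_one_minus_pos_lower_bound[of "2*l"] True assms show ?thesis
      by (simp add: power2_eq_square)
  next
    case False
    from ln_one_plus_pos_lower_bound[of "-2*l"] False assms
    have "-2*l - (-2*l)\<^sup>2 \<le> ln (1 - 2*l)" by simp
    moreover have "0 \<le> l*l" by simp
    ultimately show ?thesis unfolding power2_eq_square by linarith
  qed
  have pos: "0 < 1 - 2*l" using assms by auto
  have "exp (-2*l - 8*l\<^sup>2) \<le> 1 - 2*l"
    using ln pos by (metis exp_le_cancel_iff exp_ln)
  hence sq: "sqrt (exp (-2*l - 8*l\<^sup>2)) \<le> sqrt (1 - 2*l)" by (rule real_sqrt_le_mono)
  moreover have "sqrt (exp (-2*l - 8*l\<^sup>2)) = exp (-l - 4*l\<^sup>2)"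
  proof (rule real_sqrt_unique)
    have "(exp (-l - 4*l\<^sup>2))\<^sup>2 = exp ((-l - 4*l\<^sup>2) + (-l - 4*l\<^sup>2))"
      unfolding power2_eq_square exp_add ..
    also have "(-l - 4*l\<^sup>2) + (-l - 4*l\<^sup>2) = -2*l - 8*l\<^sup>2" by simp
    finally show "(exp (-l - 4*l\<^sup>2))\<^sup>2 = exp (-2*l - 8*l\<^sup>2)" .
  qed simp
  ultimately have "exp (-l - 4*l\<^sup>2) \<le> sqrt (1 - 2*l)" using sq by simp
  hence "exp (-l) \<le> exp (4 * l\<^sup>2) * sqrt (1 - 2*l)"
    by (simp add: exp_diff field_simps)
  thus ?thesis using pos by (simp add: divide_le_eq mult.commute)
qed

lemma normal_mgf:
  fixes l :: real assumes "l < 1/2"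
  shows "(\<integral>\<^sup>+x. ennreal (exp (l*(x\<^sup>2-1))) \<partial>density lborel (\<lambda>x. ennreal (normal_density 0 1 x)))
       = ennreal (exp (-l) / sqrt (1-2*l))"
proof -
  define \<sigma> where "\<sigma> = 1 / sqrt (1 - 2*l)"
  have pos: "0 < 1 - 2*l" using assms by auto
  have sp: "\<sigma> > 0" using pos by (simp add: \<sigma>_def)
  have s2: "\<sigma>\<^sup>2 = 1 / (1 - 2*l)" using pos by (simp add: \<sigma>_def power_divide)
  have pt: "normal_density 0 1 x * exp (l*(x\<^sup>2-1)) = exp (-l) * \<sigma> * normal_density 0 \<sigma> x" for x
  proof -
    have "sqrt (2*pi*\<sigma>\<^sup>2) = sqrt (2*pi) * \<sigma>" using sp by (simp add: real_sqrt_mult)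
    moreover have "- x\<^sup>2 / (2 * \<sigma>\<^sup>2) = -x\<^sup>2/2 + l * x\<^sup>2"
    proof -
      have "- x\<^sup>2 / (2 * \<sigma>\<^sup>2) = - x\<^sup>2 * (1/\<sigma>\<^sup>2) / 2" by simp
      also have "1/\<sigma>\<^sup>2 = 1 - 2*l" using s2 pos by simp
      finally show ?thesis by (simp add: algebra_simps)
    qed
    ultimately show ?thesis
      unfolding normal_density_def using sp
      by (simp add: exp_add[symmetric] exp_diff field_simps)
  qed
  have "(\<integral>\<^sup>+x. ennreal (exp (l*(x\<^sup>2-1))) \<partial>density lborel (\<lambda>x. ennreal (normal_density 0 1 x)))
      = (\<integral>\<^sup>+x. ennreal (normal_density 0 1 x) * ennreal (exp (l*(x\<^sup>2-1))) \<partial>lborel)"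
    by (rule nn_integral_density) auto
  also have "\<dots> = (\<integral>\<^sup>+x. ennreal (exp (-l) * \<sigma>) * ennreal (normal_density 0 \<sigma> x) \<partial>lborel)"
    using sp by (intro nn_integral_cong) (simp add: pt flip: ennreal_mult)
  also have "\<dots> = ennreal (exp (-l) * \<sigma>) * (\<integral>\<^sup>+x. ennreal (normal_density 0 \<sigma> x) \<partial>lborel)"
    by (rule nn_integral_cmult) auto
  also have "(\<integral>\<^sup>+x. ennreal (normal_density 0 \<sigma> x) \<partial>lborel) = 1"
    using integrable_normal_density[OF sp, of 0] integral_normal_density[OF sp, of 0]
    by (subst nn_integral_eq_integral) simp_all
  finally show ?thesis by (simp add: \<sigma>_def)
qed


lemma (in prob_space) chi_mgf:
  assumes fin: "finite K" and ind: "indep_vars (\<lambda>_. borel) z K"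
    and dis: "\<And>k. k\<in>K \<Longrightarrow> distr M lborel (z k) = density lborel (\<lambda>x. ennreal (normal_density 0 1 x))"
    and l: "\<bar>l\<bar> \<le> 1/4"
  shows "(\<integral>\<^sup>+\<omega>. ennreal (exp (l * (\<Sum>k\<in>K. (z k \<omega>)\<^sup>2 - 1))) \<partial>M) \<le> ennreal (exp (4*l\<^sup>2*real (card K)))"
proof -
  have rv: "k \<in> K \<Longrightarrow> z k \<in> borel_measurable M" for k
    using ind by (auto simp: indep_vars_def)
  have "(\<integral>\<^sup>+\<omega>. ennreal (exp (l * (\<Sum>k\<in>K. (z k \<omega>)\<^sup>2 - 1))) \<partial>M)
      = (\<integral>\<^sup>+\<omega>. (\<Prod>k\<in>K. ennreal (exp (l * ((z k \<omega>)\<^sup>2 - 1)))) \<partial>M)"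
    by (intro nn_integral_cong) (simp add: sum_distrib_left exp_sum fin prod_ennreal)
  also have "\<dots> = (\<Prod>k\<in>K. \<integral>\<^sup>+\<omega>. ennreal (exp (l * ((z k \<omega>)\<^sup>2 - 1))) \<partial>M)"
    by (intro indep_vars_nn_integral fin indep_vars_compose2[OF ind]) auto
  also have "\<dots> \<le> (\<Prod>k\<in>K. ennreal (exp (4*l\<^sup>2)))"
  proof (intro prod_mono_ennreal)
    fix k assume k: "k \<in> K"
    have zm: "z k \<in> measurable M lborel" using rv[OF k] by simp
    have "(\<integral>\<^sup>+\<omega>. ennreal (exp (l * ((z k \<omega>)\<^sup>2 - 1))) \<partial>M)
        = (\<integral>\<^sup>+x. ennreal (exp (l * (x\<^sup>2 - 1))) \<partial>distr M lborel (z k))"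
      using zm by (subst nn_integral_distr) auto
    also have "\<dots> = ennreal (exp (-l) / sqrt (1-2*l))"
      using dis[OF k] normal_mgf[of l] l by simp
    also have "\<dots> \<le> ennreal (exp (4*l\<^sup>2))"
      using exp_bound_aux[OF l] by (simp add: ennreal_leI)
    finally show "(\<integral>\<^sup>+\<omega>. ennreal (exp (l * ((z k \<omega>)\<^sup>2 - 1))) \<partial>M) \<le> ennreal (exp (4*l\<^sup>2))" .
  qed
  also have "\<dots> = ennreal (exp (4*l\<^sup>2*real (card K)))"
    by (simp add: ennreal_power exp_of_nat_mult[symmetric] mult.commute)
  finally show ?thesis .
qed

lemma (in prob_space) chi_tail_one:
  assumes fin: "finite K" and ind: "indep_vars (\<lambda>_. borel) z K"
    and dis: "\<And>k. k\<in>K \<Longrightarrow> distr M lborel (z k) = density lborel (\<lambda>x. ennreal (normal_density 0 1 x))"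
    and n: "card K > 0" and s: "0 < s" "s \<le> real (card K)" and sg: "\<bar>g\<bar> = 1"
  shows "emeasure M {\<omega>\<in>space M. s \<le> g * (\<Sum>k\<in>K. (z k \<omega>)\<^sup>2 - 1)}
          \<le> ennreal (exp (-s\<^sup>2/(16*real (card K))))"
proof -
  define n where "n = real (card K)"
  have np: "n > 0" using n by (simp add: n_def)
  define l where "l = s/(8*n)"
  have lp: "l > 0" using s np by (simp add: l_def)
  have l4: "\<bar>g*l\<bar> \<le> 1/4" using s np sg lp by (simp add: l_def abs_mult field_simps n_def)
  have rv: "k \<in> K \<Longrightarrow> z k \<in> borel_measurable M" for k
    using ind by (auto simp: indep_vars_def)
  have "emeasure M {\<omega>\<in>space M. s \<le> g * (\<Sum>k\<in>K. (z k \<omega>)\<^sup>2 - 1)}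
     \<le> ennreal (exp (-l * s)) * nn_integral M (\<lambda>\<omega>. ennreal (exp (l * (g * (\<Sum>k\<in>K. (z k \<omega>)\<^sup>2 - 1)))) * indicator (space M) \<omega>)"
  proof (intro Chernoff_ineq_nn_integral_ge lp)
    have m1: "(\<lambda>\<omega>. (\<Sum>k\<in>K. (z k \<omega>)\<^sup>2 - 1)) \<in> borel_measurable M"
      using rv by (intro borel_measurable_sum) auto
    show "(\<lambda>\<omega>. g * (\<Sum>k\<in>K. (z k \<omega>)\<^sup>2 - 1) * indicator (space M) \<omega>) \<in> borel_measurable M"
      by (intro borel_measurable_times borel_measurable_const m1 borel_measurable_indicator) simp
  qed auto
  also have "nn_integral M (\<lambda>\<omega>. ennreal (exp (l * (g * (\<Sum>k\<in>K. (z k \<omega>)\<^sup>2 - 1)))) * indicator (space M) \<omega>)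
      = (\<integral>\<^sup>+\<omega>. ennreal (exp ((g*l) * (\<Sum>k\<in>K. (z k \<omega>)\<^sup>2 - 1))) \<partial>M)"
    by (intro nn_integral_cong) (simp add: mult_ac)
  also have "ennreal (exp (-l * s)) * \<dots> \<le> ennreal (exp (-l * s)) * ennreal (exp (4*(g*l)\<^sup>2*n))"
    unfolding n_def by (rule mult_left_mono[OF chi_mgf[OF fin ind dis l4]]) auto
  also have "ennreal (exp (-l * s)) * ennreal (exp (4*(g*l)\<^sup>2*n)) = ennreal (exp (-s\<^sup>2/(16*n)))"
  proof -
    have "g = 1 \<or> g = -1" using sg by (auto simp: abs_if split: if_splits)
    hence "(g*l)\<^sup>2 = l\<^sup>2" by auto
    moreover have "-l * s + 4*l\<^sup>2*n = -s\<^sup>2/(16*n)" using np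
      by (simp add: l_def field_simps power2_eq_square)
    ultimately show ?thesis by (simp add: exp_add[symmetric] flip: ennreal_mult)
  qed
  finally show ?thesis unfolding n_def .
qed


lemma (in prob_space) chi_tail:
  assumes fin: "finite K" and ind: "indep_vars (\<lambda>_. borel) z K"
    and dis: "\<And>k. k\<in>K \<Longrightarrow> distr M lborel (z k) = density lborel (\<lambda>x. ennreal (normal_density 0 1 x))"
    and n: "card K > 0" and s: "0 \<le> s" "s \<le> real (card K)"
  shows "prob {\<omega>\<in>space M. s \<le> \<bar>\<Sum>k\<in>K. (z k \<omega>)\<^sup>2 - 1\<bar>} \<le> 2 * exp (-s\<^sup>2/(16*real (card K)))"
proof (cases "s = 0")
  case True
  have "prob {\<omega>\<in>space M. s \<le> \<bar>\<Sum>k\<in>K. (z k \<omega>)\<^sup>2 - 1\<bar>} \<le> 1" by (rule prob_le_1)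
  moreover have "-s\<^sup>2/(16*real (card K)) = 0" using True by simp
  hence "exp (-s\<^sup>2/(16*real (card K))) = 1" by (simp only: exp_zero)
  ultimately show ?thesis by linarith
next
  case False
  hence sp: "0 < s" using s by simp
  have rv: "k \<in> K \<Longrightarrow> z k \<in> borel_measurable M" for k
    using ind by (auto simp: indep_vars_def)
  define S where "S = (\<lambda>\<omega>. \<Sum>k\<in>K. (z k \<omega>)\<^sup>2 - 1)"
  have m1[measurable]: "S \<in> borel_measurable M"
    unfolding S_def using rv by (intro borel_measurable_sum) auto
  define A where "A g = {\<omega>\<in>space M. s \<le> g * S \<omega>}" for g :: real
  have Am: "A g \<in> sets M" for g
  proof -
    have "(\<lambda>\<omega>. g * S \<omega>) \<in> borel_measurable M" by (intro borel_measurable_times borel_measurable_const m1)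
    hence "\<forall>a. {\<omega>\<in>space M. a \<le> g * S \<omega>} \<in> sets M" by (rule borel_measurable_iff_ge[THEN iffD1])
    hence "{\<omega>\<in>space M. s \<le> g * S \<omega>} \<in> sets M" by blast
    thus ?thesis unfolding A_def .
  qed
  have bnd: "prob (A g) \<le> exp (-s\<^sup>2/(16*real (card K)))" if "\<bar>g\<bar> = 1" for g
  proof -
    have "emeasure M (A g) \<le> ennreal (exp (-s\<^sup>2/(16*real (card K))))"
      unfolding A_def S_def by (rule chi_tail_one[OF fin ind dis n sp s(2) that])
    thus ?thesis by (simp add: emeasure_eq_measure)
  qed
  have "{\<omega>\<in>space M. s \<le> \<bar>\<Sum>k\<in>K. (z k \<omega>)\<^sup>2 - 1\<bar>} = A 1 \<union> A (-1)"
  proof -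
    have "s \<le> \<bar>x\<bar> \<longleftrightarrow> s \<le> 1 * x \<or> s \<le> (-1) * x" for x :: real by linarith
    thus ?thesis unfolding A_def S_def by blast
  qed
  hence "prob {\<omega>\<in>space M. s \<le> \<bar>\<Sum>k\<in>K. (z k \<omega>)\<^sup>2 - 1\<bar>} \<le> prob (A 1) + prob (A (-1))"
    using measure_Un_le[OF Am Am] by simp
  also have "\<dots> \<le> 2 * exp (-s\<^sup>2/(16*real (card K)))"
    using bnd[of 1] bnd[of "-1"] by simp
  finally show ?thesis .
qed



lemma alg_core:
  fixes w s q d :: real
  assumes w: "0 \<le> w" and ww: "w\<^sup>2 = 1 + s + q" and s: "\<bar>s\<bar> \<le> 2*d" and q: "\<bar>q\<bar> \<le> d\<^sup>2"
    and d: "0 \<le> d" "d \<le> 1/2"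
  shows "\<bar>1 - w + s*w/2\<bar> \<le> 7*d\<^sup>2"
proof -
  have h1: "(w-1)*(w+1) = s+q" using ww by (simp add: power2_eq_square algebra_simps)
  have "\<bar>s+q\<bar> = \<bar>w-1\<bar>*\<bar>w+1\<bar>" unfolding h1[symmetric] abs_mult ..
  moreover have "\<bar>w+1\<bar> = w+1" using w by simp
  ultimately have "\<bar>w-1\<bar>*(w+1) = \<bar>s+q\<bar>" by simp
  moreover have "\<bar>w-1\<bar>*1 \<le> \<bar>w-1\<bar>*(w+1)" using w by (intro mult_left_mono) auto
  ultimately have wm1: "\<bar>w-1\<bar> \<le> \<bar>s+q\<bar>" by simp
  have id: "(1 - w + s*w/2)*(1+w) = s*(w-1)*(w+2)/2 - q"
    using ww by (simp add: power2_eq_square algebra_simps)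
  have "\<bar>1 - w + s*w/2\<bar>*(1+w) = \<bar>(1 - w + s*w/2)*(1+w)\<bar>" using w by (simp add: abs_mult)
  also have "\<dots> = \<bar>s*(w-1)*(w+2)/2 - q\<bar>" unfolding id ..
  also have "\<dots> \<le> \<bar>s\<bar>*\<bar>w-1\<bar>*(w+2)/2 + \<bar>q\<bar>"
  proof -
    have "\<bar>s*(w-1)*(w+2)/2\<bar> = \<bar>s\<bar>*\<bar>w-1\<bar>*(w+2)/2" using w by (simp add: abs_mult)
    thus ?thesis using abs_triangle_ineq4[of "s*(w-1)*(w+2)/2" q] by linarith
  qed
  also have "\<dots> \<le> \<bar>s\<bar>*\<bar>w-1\<bar>*(1+w) + \<bar>q\<bar>*(1+w)"
  proof -
    have "(\<bar>s\<bar>*\<bar>w-1\<bar>)*((w+2)/2) \<le> (\<bar>s\<bar>*\<bar>w-1\<bar>)*(1+w)"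
      using w by (intro mult_left_mono) auto
    hence "\<bar>s\<bar>*\<bar>w-1\<bar>*(w+2)/2 \<le> \<bar>s\<bar>*\<bar>w-1\<bar>*(1+w)" by simp
    moreover have "\<bar>q\<bar> \<le> \<bar>q\<bar>*(1+w)" using w by (simp add: mult_le_cancel_left1)
    ultimately show ?thesis by linarith
  qed
  also have "\<dots> = (\<bar>s\<bar>*\<bar>w-1\<bar> + \<bar>q\<bar>)*(1+w)" by (simp only: distrib_right)
  finally have X: "\<bar>1 - w + s*w/2\<bar>*(1+w) \<le> (\<bar>s\<bar>*\<bar>w-1\<bar> + \<bar>q\<bar>)*(1+w)" .
  have "0 < 1+w" using w by linarith
  from mult_right_le_imp_le[OF X this] have "\<bar>1 - w + s*w/2\<bar> \<le> \<bar>s\<bar>*\<bar>w-1\<bar> + \<bar>q\<bar>" .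
  also have "\<dots> \<le> (2*d)*(2*d + d\<^sup>2) + d\<^sup>2"
  proof -
    have "\<bar>s+q\<bar> \<le> 2*d + d\<^sup>2" using s q by linarith
    hence "\<bar>w-1\<bar> \<le> 2*d + d\<^sup>2" using wm1 by linarith
    hence "\<bar>s\<bar>*\<bar>w-1\<bar> \<le> (2*d)*(2*d + d\<^sup>2)" using s by (intro mult_mono) auto
    thus ?thesis using q by linarith
  qed
  also have "\<dots> \<le> 7*d\<^sup>2"
  proof -
    have "d*d\<^sup>2 \<le> (1/2)*d\<^sup>2" using d by (intro mult_right_mono) auto
    moreover have "(2*d)*(2*d + d\<^sup>2) + d\<^sup>2 = 5*d\<^sup>2 + 2*(d*d\<^sup>2)"
      by (simp add: power2_eq_square algebra_simps)
    moreover have "0 \<le> d\<^sup>2" by simp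
    ultimately show ?thesis by linarith
  qed
  finally show ?thesis .
qed


lemma det:
  fixes X :: "nat \<Rightarrow> nat \<Rightarrow> real" and n :: nat and d :: real
  assumes n: "n > 0" and d: "0 \<le> d" "d \<le> 1/2"
    and Li: "\<bar>Lstat n X i\<bar> \<le> d * n" and Lj: "\<bar>Lstat n X j\<bar> \<le> d * n"
  shows "\<bar>Estat n X i j\<bar> * \<bar>(1 / sqrt (real n)) * (\<Sum>k=1..n. X k i * X k j)\<bar> \<le> 7*d\<^sup>2* sqrt (real n)"
proof -
  have np: "real n > 0" using n by simp
  define t1 where "t1 = Lstat n X i / n"
  define t2 where "t2 = Lstat n X j / n"
  have L1: "Lstat n X i = t1 * n" using np by (simp add: t1_def)
  have L2: "Lstat n X j = t2 * n" using np by (simp add: t2_def)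
  have t1b: "\<bar>t1\<bar> \<le> d" using Li np by (simp add: t1_def abs_divide divide_le_eq)
  have t2b: "\<bar>t2\<bar> \<le> d" using Lj np by (simp add: t2_def abs_divide divide_le_eq)
  define u1 where "u1 = 1 + t1"
  define u2 where "u2 = 1 + t2"
  have u1p: "u1 > 0" using t1b d by (auto simp: u1_def abs_le_iff)
  have u2p: "u2 > 0" using t2b d by (auto simp: u2_def abs_le_iff)
  have S1: "(\<Sum>k=1..n. (X k i)\<^sup>2) = n * u1"
  proof -
    have "(\<Sum>k=1..n. (X k i)\<^sup>2) = Lstat n X i + n" by (simp add: Lstat_def)
    also have "\<dots> = n * u1" unfolding L1 u1_def by (simp add: algebra_simps)
    finally show ?thesis .
  qed
  have S2: "(\<Sum>k=1..n. (X k j)\<^sup>2) = n * u2"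
  proof -
    have "(\<Sum>k=1..n. (X k j)\<^sup>2) = Lstat n X j + n" by (simp add: Lstat_def)
    also have "\<dots> = n * u2" unfolding L2 u2_def by (simp add: algebra_simps)
    finally show ?thesis .
  qed
  define r1 where "r1 = 1 / sqrt u1"
  define r2 where "r2 = 1 / sqrt u2"
  have pw: "u powr (-1/2) = 1 / sqrt u" if "u > 0" for u :: real
  proof -
    have h: "(-1/2::real) = - (1/2)" by simp
    have "u powr (-1/2) = u powr (- (1/2))" unfolding h ..
    also have "\<dots> = inverse (u powr (1/2))" by (rule powr_minus)
    also have "\<dots> = 1 / sqrt u" using that by (simp add: powr_half_sqrt inverse_eq_divide)
    finally show ?thesis .
  qed
  have e1: "epsn n X i = r1 - 1 + t1/2"
    unfolding epsn_def L1 r1_def using np pw[OF u1p] by (simp add: u1_def)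
  have e2: "epsn n X j = r2 - 1 + t2/2"
    unfolding epsn_def L2 r2_def using np pw[OF u2p] by (simp add: u2_def)
  have E: "Estat n X i j = r1*r2 - 1 + (t1+t2)/2"
    unfolding Estat_def L1 L2 e1 e2 using np by (simp add: field_simps power2_eq_square)
  define w where "w = sqrt (u1*u2)"
  have wp: "w > 0" using u1p u2p by (simp add: w_def)
  have rw: "r1*r2 = 1/w" by (simp add: r1_def r2_def w_def real_sqrt_mult)
  have Ew: "Estat n X i j * w = 1 - w + (t1+t2)*w/2"
    using wp unfolding E rw by (simp add: field_simps)
  have ww: "w\<^sup>2 = 1 + (t1+t2) + t1*t2"
  proof -
    have "0 \<le> u1*u2" using u1p u2p by simp
    hence "w\<^sup>2 = u1*u2" by (simp add: w_def)
    also have "\<dots> = 1 + (t1+t2) + t1*t2" by (simp add: u1_def u2_def algebra_simps)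
    finally show ?thesis .
  qed
  have sb: "\<bar>t1+t2\<bar> \<le> 2*d" using t1b t2b by linarith
  have qb: "\<bar>t1*t2\<bar> \<le> d\<^sup>2"
    using t1b t2b by (simp add: abs_mult power2_eq_square mult_mono)
  have core: "\<bar>Estat n X i j\<bar> * w \<le> 7*d\<^sup>2"
  proof -
    have "\<bar>Estat n X i j\<bar> * w = \<bar>Estat n X i j * w\<bar>" using wp by (simp add: abs_mult)
    also have "\<dots> = \<bar>1 - w + (t1+t2)*w/2\<bar>" unfolding Ew ..
    also have "\<dots> \<le> 7*d\<^sup>2" by (rule alg_core[OF _ ww sb qb d]) (use wp in simp)
    finally show ?thesis .
  qed
  have CS: "\<bar>\<Sum>k=1..n. X k i * X k j\<bar> \<le> n * w"
  proof -
    have "\<bar>\<Sum>k=1..n. X k i * X k j\<bar> \<le> (\<Sum>k=1..n. \<bar>X k i\<bar> * \<bar>X k j\<bar>)"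
      by (rule order_trans[OF sum_abs]) (simp add: abs_mult)
    also have "\<dots> \<le> L2_set (\<lambda>k. X k i) {1..n} * L2_set (\<lambda>k. X k j) {1..n}"
      by (rule L2_set_mult_ineq)
    also have "\<dots> = sqrt (n*u1) * sqrt (n*u2)" unfolding L2_set_def by (simp only: S1 S2)
    also have "\<dots> = n * w"
      using np u1p u2p by (simp add: w_def real_sqrt_mult)
    finally show ?thesis .
  qed
  have "\<bar>Estat n X i j\<bar> * \<bar>(1 / sqrt (real n)) * (\<Sum>k=1..n. X k i * X k j)\<bar>
      = \<bar>Estat n X i j\<bar> * \<bar>\<Sum>k=1..n. X k i * X k j\<bar> / sqrt n"
    by (simp add: abs_mult)
  also have "\<dots> \<le> \<bar>Estat n X i j\<bar> * (n * w) / sqrt n"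
    using CS np by (intro divide_right_mono mult_left_mono) auto
  also have "\<dots> = (\<bar>Estat n X i j\<bar> * w) * sqrt n"
    using np by (simp add: field_simps real_sqrt_mult[symmetric] )
  also have "\<dots> \<le> 7*d\<^sup>2 * sqrt n"
    using core by (intro mult_right_mono) auto
  finally show ?thesis .
qed


lemma finite_pairs_set:
  fixes f :: "nat \<Rightarrow> nat \<Rightarrow> real"
  shows "finite {f i j |i j. 1 \<le> i \<and> i < j \<and> j \<le> m}"
  by (rule finite_subset[of _ "(\<lambda>(i,j). f i j) ` ({1..m}\<times>{1..m})"]) auto

lemma max_set_le:
  fixes f :: "nat \<Rightarrow> nat \<Rightarrow> real"
  assumes "0 \<le> B" "\<And>i j. 1 \<le> i \<Longrightarrow> i < j \<Longrightarrow> j \<le> m \<Longrightarrow> f i j \<le> B"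
  shows "Max (insert 0 {f i j |i j. 1 \<le> i \<and> i < j \<and> j \<le> m}) \<le> B"
  using assms finite_pairs_set[of f m] by (subst Max_le_iff) auto

lemma max_set_ge0:
  fixes f :: "nat \<Rightarrow> nat \<Rightarrow> real"
  shows "0 \<le> Max (insert 0 {f i j |i j. 1 \<le> i \<and> i < j \<and> j \<le> m})"
  using finite_pairs_set[of f m] by (intro Max_ge) auto

lemma delta_sum:
  fixes f :: "nat \<Rightarrow> real"
  assumes "finite S" "i \<in> S"
  shows "(\<Sum>j\<in>S. (if j = i then 1 else 0) * f j) = f i"
proof -
  have "(\<Sum>j\<in>S. (if j = i then 1 else 0) * f j) = (\<Sum>j\<in>S. if j = i then f j else 0)"
    by (intro sum.cong) auto
  also have "\<dots> = f i" using assms by (simp only: sum.delta if_True)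
  finally show ?thesis .
qed

theorem lemma3:
  fixes M :: "nat \<Rightarrow> 'a measure"
    and p :: "nat \<Rightarrow> nat"
    and \<Sigma> :: "nat \<Rightarrow> nat \<Rightarrow> nat \<Rightarrow> real"
    and x :: "nat \<Rightarrow> nat \<Rightarrow> nat \<Rightarrow> 'a \<Rightarrow> real"
  assumes prob: "\<And>n. prob_space (M n)"
    and diag: "\<And>n i. i \<in> {1..p n} \<Longrightarrow> \<Sigma> n i i = 1"
    and gauss: "\<And>n k. k \<in> {1..n} \<Longrightarrow> gaussian_vector (M n) {1..p n} (\<lambda>i. x n k i) (\<Sigma> n)"
    and indep: "\<And>n. prob_space.indep_vars (M n) (\<lambda>k. PiM {1..p n} (\<lambda>_. borel))
                   (\<lambda>k \<omega>. \<lambda>i\<in>{1..p n}. x n k i \<omega>) {1..n}"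
    and p_inf: "filterlim p at_top sequentially"
    and logp: "(\<lambda>n. ln (real (p n)) / real n) \<longlonglongrightarrow> 0"
  shows "bigOP M
           (\<lambda>n \<omega>. Max (insert 0 {\<bar>Estat n (\<lambda>k i. x n k i \<omega>) i j\<bar> *
                       \<bar>(1 / sqrt (real n)) * (\<Sum>k=1..n. x n k i \<omega> * x n k j \<omega>)\<bar> |
                     i j. 1 \<le> i \<and> i < j \<and> j \<le> p n}))
           (\<lambda>n. ln (real (p n)) / sqrt (real n))"
proof -
  define \<xi> where "\<xi> n \<omega> = Max (insert 0 {\<bar>Estat n (\<lambda>k i. x n k i \<omega>) i j\<bar> *
                       \<bar>(1 / sqrt (real n)) * (\<Sum>k=1..n. x n k i \<omega> * x n k j \<omega>)\<bar> |
                     i j. 1 \<le> i \<and> i < j \<and> j \<le> p n})" for n \<omega>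
  define a where "a n = ln (real (p n)) / sqrt (real n)" for n
  define P where "P C n = measure (M n) {\<omega> \<in> space (M n). \<bar>\<xi> n \<omega> / a n\<bar> > C}" for C n
  have meas: "x n k i \<in> borel_measurable (M n)" if "k \<in> {1..n}" "i \<in> {1..p n}" for n k i
    using gauss[OF that(1)] that(2) unfolding gaussian_vector_def by auto
  have marg: "distr (M n) lborel (x n k i) = density lborel (\<lambda>x. ennreal (normal_density 0 1 x))"
    if k: "k \<in> {1..n}" and i: "i \<in> {1..p n}" for n k i
  proof -
    define c where "c j = (if j = i then 1 else 0 :: real)" for j
    have "distr (M n) lborel (\<lambda>\<omega>. \<Sum>j\<in>{1..p n}. c j * x n k j \<omega>) =
          centered_normal (\<Sum>j\<in>{1..p n}. \<Sum>j'\<in>{1..p n}. c j * c j' * \<Sigma> n j j')"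
      using gauss[OF k] unfolding gaussian_vector_def by blast
    moreover have "(\<lambda>\<omega>. \<Sum>j\<in>{1..p n}. c j * x n k j \<omega>) = x n k i"
    proof
      fix \<omega>
      have "(\<Sum>j\<in>{1..p n}. c j * x n k j \<omega>) = (\<Sum>j\<in>{1..p n}. if j = i then x n k j \<omega> else 0)"
        by (intro sum.cong) (auto simp: c_def)
      also have "\<dots> = x n k i \<omega>" using i by (simp only: sum.delta finite_atLeastAtMost if_True)
      finally show "(\<Sum>j\<in>{1..p n}. c j * x n k j \<omega>) = x n k i \<omega>" .
    qed
    moreover have "(\<Sum>j\<in>{1..p n}. \<Sum>j'\<in>{1..p n}. c j * c j' * \<Sigma> n j j') = 1"
    proof -
      have "(\<Sum>j\<in>{1..p n}. \<Sum>j'\<in>{1..p n}. c j * c j' * \<Sigma> n j j')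
          = (\<Sum>j\<in>{1..p n}. c j * (\<Sum>j'\<in>{1..p n}. c j' * \<Sigma> n j j'))"
        by (simp add: sum_distrib_left mult.assoc)
      also have "\<dots> = (\<Sum>j\<in>{1..p n}. c j * \<Sigma> n j i)"
        using delta_sum[OF _ i] unfolding c_def by simp
      also have "\<dots> = \<Sigma> n i i"
        using delta_sum[OF _ i] unfolding c_def by simp
      finally show ?thesis using diag[OF i] by simp
    qed
    ultimately show ?thesis by (simp add: centered_normal_def)
  qed
  have ind1: "prob_space.indep_vars (M n) (\<lambda>_. borel) (\<lambda>k \<omega>. x n k i \<omega>) {1..n}"
    if i: "i \<in> {1..p n}" for n i
  proof -
    have "prob_space.indep_vars (M n) (\<lambda>_. borel) (\<lambda>k \<omega>. (\<lambda>f. f i) ((\<lambda>i\<in>{1..p n}. x n k i \<omega>))) {1..n}"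
      by (rule prob_space.indep_vars_compose2[OF prob indep]) (use i in simp)
    moreover have "(\<lambda>k \<omega>. (\<lambda>f. f i) ((\<lambda>i\<in>{1..p n}. x n k i \<omega>))) = (\<lambda>k \<omega>. x n k i \<omega>)"
      using i by auto
    ultimately show ?thesis by simp
  qed
  have tail: "measure (M n) {\<omega>\<in>space (M n). s \<le> \<bar>\<Sum>k\<in>{1..n}. (x n k i \<omega>)\<^sup>2 - 1\<bar>}
       \<le> 2 * exp (-s\<^sup>2/(16*real n))"
    if "i \<in> {1..p n}" "n > 0" "0 \<le> s" "s \<le> real n" for n i s
  proof -
    interpret prob_space "M n" by (rule prob)
    show ?thesis
      using chi_tail[of "{1..n}" "\<lambda>k \<omega>. x n k i \<omega>" s] ind1[OF that(1)] marg[OF _ that(1)] that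
      by simp
  qed
  have Bm: "{\<omega>\<in>space (M n). s \<le> \<bar>\<Sum>k\<in>{1..n}. (x n k i \<omega>)\<^sup>2 - 1\<bar>} \<in> sets (M n)"
    if "i \<in> {1..p n}" for n i s
  proof -
    have "(\<lambda>\<omega>. \<bar>\<Sum>k\<in>{1..n}. (x n k i \<omega>)\<^sup>2 - 1\<bar>) \<in> borel_measurable (M n)"
      using meas[OF _ that] by (intro borel_measurable_abs borel_measurable_sum) auto
    hence "\<forall>a. {\<omega>\<in>space (M n). a \<le> \<bar>\<Sum>k\<in>{1..n}. (x n k i \<omega>)\<^sup>2 - 1\<bar>} \<in> sets (M n)"
      by (rule borel_measurable_iff_ge[THEN iffD1])
    thus ?thesis by blast
  qed
  have Lrel: "Lstat n (\<lambda>k i. x n k i \<omega>) i = (\<Sum>k\<in>{1..n}. (x n k i \<omega>)\<^sup>2 - 1)" for n i \<omega>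
    by (simp add: Lstat_def sum_subtractf)
  have key: "eventually (\<lambda>n. P C n \<le> 2 / real (p n)) sequentially" if C: "C \<ge> 224" for C
  proof -
    have ev1: "eventually (\<lambda>n. n \<ge> 1) sequentially" by (rule eventually_ge_at_top)
    have ev2: "eventually (\<lambda>n. p n \<ge> 2) sequentially"
      using p_inf by (simp add: filterlim_at_top)
    have ev3: "eventually (\<lambda>n. ln (real (p n)) / real n < 7/(4*C)) sequentially"
      using C by (intro order_tendstoD(2)[OF logp]) auto
    show ?thesis using ev1 ev2 ev3
    proof eventually_elim
      case (elim n)
      define N where "N = real n"
      define m where "m = p n"
      define lp where "lp = ln (real m)"
      have Np: "N > 0" using elim by (simp add: N_def)
      have m2: "real m \<ge> 2" using elim by (simp add: m_def)
      have lpp: "lp > 0" using m2 by (simp add: lp_def)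
      have Cp: "C > 0" using C by simp
      have r3: "C * lp / N \<le> 7/4"
      proof -
        have "lp / N < 7/(4*C)" using elim by (simp add: lp_def m_def N_def)
        hence "C * (lp / N) \<le> C * (7/(4*C))" using Cp by (intro mult_left_mono) auto
        thus ?thesis using Cp by simp
      qed
      define s where "s = sqrt (C * N * lp / 7)"
      have s0: "s > 0" using Cp Np lpp by (simp add: s_def)
      have ss: "s\<^sup>2 = C * N * lp / 7" using Cp Np lpp by (simp add: s_def)
      have sN: "s \<le> N/2"
      proof -
        have "s\<^sup>2 \<le> (N/2)\<^sup>2"
        proof -
          have "C * N * lp / 7 = (C * lp / N) * N\<^sup>2 / 7" using Np by (simp add: power2_eq_square field_simps)
          also have "\<dots> \<le> (7/4) * N\<^sup>2 / 7" using r3 by (intro divide_right_mono mult_right_mono) auto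
          also have "\<dots> = (N/2)\<^sup>2" by (simp add: power2_eq_square)
          finally show ?thesis using ss by simp
        qed
        thus ?thesis by (rule power2_le_imp_le) (use Np in simp)
      qed
      define d where "d = s / N"
      have d0: "0 \<le> d" using s0 Np by (simp add: d_def)
      have d1: "d \<le> 1/2" using sN Np by (simp add: d_def divide_le_eq)
      have ap: "a n > 0" using lpp Np by (simp add: a_def lp_def m_def N_def)
      have Cd: "7 * d\<^sup>2 * sqrt N = C * a n"
      proof -
        have "7 * d\<^sup>2 * sqrt N = 7 * s\<^sup>2 / N\<^sup>2 * sqrt N" by (simp add: d_def power_divide)
        also have "\<dots> = C * lp * (sqrt N / N)" using Np unfolding ss by (simp add: field_simps power2_eq_square)
        also have "sqrt N / N = 1 / sqrt N"
        proof -
          have sq: "sqrt N * sqrt N = N" using Np by simp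
          have "sqrt N > 0" using Np by simp
          have gen: "r / (r*r) = 1/r" if "r > 0" for r :: real using that by (simp add: field_simps)
          have "sqrt N / (sqrt N * sqrt N) = 1 / sqrt N" by (rule gen) fact
          thus ?thesis by (simp only: sq)
        qed
        finally show ?thesis by (simp add: a_def lp_def m_def N_def)
      qed
      define B where "B i = {\<omega>\<in>space (M n). s \<le> \<bar>\<Sum>k\<in>{1..n}. (x n k i \<omega>)\<^sup>2 - 1\<bar>}" for i
      have incl: "{\<omega> \<in> space (M n). \<bar>\<xi> n \<omega> / a n\<bar> > C} \<subseteq> (\<Union>i\<in>{1..m}. B i)"
      proof
        fix \<omega> assume \<omega>: "\<omega> \<in> {\<omega> \<in> space (M n). \<bar>\<xi> n \<omega> / a n\<bar> > C}"
        show "\<omega> \<in> (\<Union>i\<in>{1..m}. B i)"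
        proof (rule ccontr)
          assume nB: "\<omega> \<notin> (\<Union>i\<in>{1..m}. B i)"
          have small: "\<bar>Lstat n (\<lambda>k i. x n k i \<omega>) i\<bar> \<le> d * N" if "i \<in> {1..m}" for i
          proof -
            have "\<omega> \<notin> B i" using nB that by blast
            hence "\<not> s \<le> \<bar>\<Sum>k\<in>{1..n}. (x n k i \<omega>)\<^sup>2 - 1\<bar>" using \<omega> by (simp add: B_def)
            moreover have "d * N = s" using Np by (simp add: d_def)
            ultimately show ?thesis unfolding Lrel by linarith
          qed
          have "\<xi> n \<omega> \<le> C * a n"
            unfolding \<xi>_def
          proof (rule max_set_le)
            show "0 \<le> C * a n" using Cp ap by simp
            fix i j assume ij: "1 \<le> i" "i < j" "j \<le> p n"
            have "\<bar>Estat n (\<lambda>k i. x n k i \<omega>) i j\<bar> * \<bar>1 / sqrt (real n) * (\<Sum>k = 1..n. x n k i \<omega> * x n k j \<omega>)\<bar>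
                  \<le> 7 * d\<^sup>2 * sqrt (real n)"
              using det[of n d "\<lambda>k i. x n k i \<omega>" i j] small[of i] small[of j] ij elim d0 d1
              by (simp add: m_def N_def)
            thus "\<bar>Estat n (\<lambda>k i. x n k i \<omega>) i j\<bar> * \<bar>1 / sqrt (real n) * (\<Sum>k = 1..n. x n k i \<omega> * x n k j \<omega>)\<bar>
                  \<le> C * a n" using Cd by (simp add: N_def)
          qed
          moreover have "0 \<le> \<xi> n \<omega>" unfolding \<xi>_def by (rule max_set_ge0)
          ultimately have "\<bar>\<xi> n \<omega> / a n\<bar> \<le> C" using ap by (simp add: divide_le_eq)
          thus False using \<omega> by simp
        qed
      qed
      interpret Mn: prob_space "M n" by (rule prob)
      have "P C n \<le> measure (M n) (\<Union>i\<in>{1..m}. B i)"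
        unfolding P_def
        by (rule Mn.finite_measure_mono[OF incl]) (use Bm in \<open>auto simp: B_def m_def\<close>)
      also have "\<dots> \<le> (\<Sum>i\<in>{1..m}. measure (M n) (B i))"
        by (rule Mn.finite_measure_subadditive_finite)
           (use Bm in \<open>auto simp: B_def m_def\<close>)
      also have "\<dots> \<le> (\<Sum>i\<in>{1..m}. 2 * exp (-s\<^sup>2/(16*N)))"
        using tail sN s0 Np elim by (intro sum_mono) (auto simp: B_def m_def N_def)
      also have "\<dots> = real m * (2 * exp (-s\<^sup>2/(16*N)))" by simp
      also have "\<dots> \<le> 2 / real m"
      proof -
        have "-s\<^sup>2/(16*N) = - (C/112) * lp" using Np unfolding ss by (simp add: field_simps)
        also have "\<dots> \<le> -2 * lp" using C lpp by (intro mult_right_mono) auto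
        finally have "exp (-s\<^sup>2/(16*N)) \<le> exp (-2 * lp)" by simp
        also have "exp (-2 * lp) = 1 / (real m)\<^sup>2"
        proof -
          have el: "exp lp = real m" using m2 by (simp add: lp_def)
          have "exp (-2 * lp) = exp (- (lp + lp))" by simp
          also have "\<dots> = inverse (exp (lp + lp))" by (rule exp_minus)
          also have "\<dots> = inverse (exp lp * exp lp)" by (simp only: exp_add)
          also have "\<dots> = 1 / (real m)\<^sup>2" by (simp only: el power2_eq_square inverse_eq_divide)
          finally show ?thesis .
        qed
        finally have "real m * (2 * exp (-s\<^sup>2/(16*N))) \<le> real m * (2 * (1 / (real m)\<^sup>2))"
          using m2 by (intro mult_left_mono) auto
        also have "\<dots> = 2 / real m" using m2 by (simp add: power2_eq_square)
        finally show ?thesis .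
      qed
      finally show ?case by (simp add: m_def)
    qed
  qed
  have lim0: "limsup (\<lambda>n. ereal (P C n)) = 0" if C: "C \<ge> 224" for C
  proof -
    have pr: "filterlim (\<lambda>n. real (p n)) at_top sequentially"
      by (rule filterlim_compose[OF filterlim_real_sequentially p_inf])
    have "(\<lambda>n. 2 / real (p n)) \<longlonglongrightarrow> 0"
      by (rule tendsto_divide_0[OF tendsto_const filterlim_at_top_imp_at_infinity[OF pr]])
    hence up: "(\<lambda>n. ereal (2 / real (p n))) \<longlonglongrightarrow> 0"
      using tendsto_ereal[of "\<lambda>n. 2 / real (p n)" 0] by (simp add: zero_ereal_def)
    have "(\<lambda>n. ereal (P C n)) \<longlonglongrightarrow> 0"
    proof (rule tendsto_sandwich[OF _ _ tendsto_const up])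
      show "\<forall>\<^sub>F n in sequentially. 0 \<le> ereal (P C n)"
        by (simp add: P_def)
      show "\<forall>\<^sub>F n in sequentially. ereal (P C n) \<le> ereal (2 / real (p n))"
        using key[OF C] by (rule eventually_mono) simp
    qed
    thus ?thesis by (intro lim_imp_Limsup) auto
  qed
  have "\<forall>\<^sub>F C in at_top. limsup (\<lambda>n. ereal (P C n)) = 0"
    using eventually_ge_at_top[of "224::real"] by (rule eventually_mono) (rule lim0)
  hence "((\<lambda>C. limsup (\<lambda>n. ereal (P C n))) \<longlongrightarrow> 0) at_top"
    by (rule tendsto_eventually)
  thus ?thesis unfolding bigOP_def P_def \<xi>_def a_def .
qed

end
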